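(* Let $G$ be an oriented graph, let $k>0$, and let $P$ be an oriented path of length $n$ with $l=l(P)\ge 1$. If $G$ has a $k$-mindegree pair, then either $G$ contains a copy of $P$ as a subgraph, or $G$ contains an independent set of size at least $\frac{k-n}{l}$.
   Context: An oriented graph is a directed graph without loops and with at most one edge between any two vertices. An oriented path is a path whose edges are oriented arbitrarily; its length is its number of edges, and $l(P)$ is the length of its longest directed subpath. An independent set is a set of vertices spanning no edges. For a directed graph $G$, a $k$-mindegree pair is a pair $(X,Y)$ of disjoint non-empty subsets of $V(G)$ such that every vertex of $X$ has at least $k$ out-neighbours in $Y$ and every vertex of $Y$ has at least $k$ in-neighbours in $X$. *)

theory Defs
  imports Complex_Main
begin

definition oriented_graph :: "'a set \<Rightarrow> ('a \<Rightarrow> 'a \<Rightarrow> bool) \<Rightarrow> bool" where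
  "oriented_graph V E \<longleftrightarrow> finite V
     \<and> (\<forall>u v. E u v \<longrightarrow> u \<in> V \<and> v \<in> V)
     \<and> (\<forall>u. \<not> E u u)
     \<and> (\<forall>u v. E u v \<longrightarrow> \<not> E v u)"

text \<open>An oriented path of length n is encoded by the list of the orientations of
  its n consecutive edges: entry i is True iff the i-th edge goes from vertex i
  to vertex i+1, False iff it goes from vertex i+1 to vertex i.\<close>

definition path_length :: "bool list \<Rightarrow> nat" where
  "path_length P = length P"

text \<open>l(P): the length of a longest directed subpath, i.e. the longest run of
  consecutive edges with the same orientation.\<close>

definition longest_directed :: "bool list \<Rightarrow> nat" where
  "longest_directed P = Max {m. \<exists>i. i + m \<le> length P \<and> (\<forall>j<m. P ! (i + j) = P ! i)}"

definition contains_path :: "'a set \<Rightarrow> ('a \<Rightarrow> 'a \<Rightarrow> bool) \<Rightarrow> bool list \<Rightarrow> bool" where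
  "contains_path V E P \<longleftrightarrow> (\<exists>f. inj_on f {0..length P} \<and> f ` {0..length P} \<subseteq> V
     \<and> (\<forall>i < length P. if P ! i then E (f i) (f (Suc i)) else E (f (Suc i)) (f i)))"

definition independent_set :: "'a set \<Rightarrow> ('a \<Rightarrow> 'a \<Rightarrow> bool) \<Rightarrow> 'a set \<Rightarrow> bool" where
  "independent_set V E S \<longleftrightarrow> S \<subseteq> V \<and> (\<forall>u\<in>S. \<forall>v\<in>S. \<not> E u v)"

definition mindegree_pair :: "'a set \<Rightarrow> ('a \<Rightarrow> 'a \<Rightarrow> bool) \<Rightarrow> nat \<Rightarrow> 'a set \<Rightarrow> 'a set \<Rightarrow> bool" where
  "mindegree_pair V E k X Y \<longleftrightarrow> X \<subseteq> V \<and> Y \<subseteq> V \<and> X \<inter> Y = {} \<and> X \<noteq> {} \<and> Y \<noteq> {}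
     \<and> (\<forall>x\<in>X. card {y\<in>Y. E x y} \<ge> k)
     \<and> (\<forall>y\<in>Y. card {x\<in>X. E x y} \<ge> k)"

end

theory Submission
  imports Defs
begin


lemma walk_distinct:
  assumes acyc: "acyclic R" and g: "\<forall>i<n. (g i, g (Suc i)) \<in> R"
    and ij: "i < j" "j \<le> n"
  shows "g i \<noteq> g j"
proof
  assume eq: "g i = g j"
  have "(g i, g j) \<in> R ^^ (j - i)"
    unfolding relpow_fun_conv
    by (rule exI[of _ "\<lambda>t. g (i + t)"]) (use ij g in auto)
  then have "(g i, g i) \<in> R\<^sup>+" using eq ij trancl_power by (metis zero_less_diff)
  with acyc show False unfolding acyclic_def by blast
qed

lemma gr:
  fixes E :: "'a \<Rightarrow> 'a \<Rightarrow> bool"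
  assumes fin: "finite W" and r: "1 \<le> r" and irr: "\<forall>u. \<not> E u u"
    and ind: "\<forall>S\<subseteq>W. (\<forall>u\<in>S. \<forall>v\<in>S. \<not> E u v) \<longrightarrow> card S * r < card W"
  shows "\<exists>hs. length hs = r \<and> distinct hs \<and> set hs \<subseteq> W \<and> (\<forall>i. Suc i < r \<longrightarrow> E (hs!i) (hs!Suc i))"
proof -
  define EW where "EW = {(u,v). u\<in>W \<and> v\<in>W \<and> E u v}"
  have finEW: "finite EW"
    by (rule finite_subset[OF _ finite_cartesian_product[OF fin fin]]) (auto simp: EW_def)
  define F where "F = {R. R \<subseteq> EW \<and> acyclic R}"
  have fF: "finite F" unfolding F_def using finEW by (auto intro: finite_subset[of _ "Pow EW"])
  have "{} \<in> F" unfolding F_def by (simp add: acyclic_def)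
  then have nF: "F \<noteq> {}" by blast
  obtain R where RF: "R \<in> F" and mx: "\<forall>b\<in>F. R \<subseteq> b \<longrightarrow> R = b"
    using finite_has_maximal[OF fF nF] by auto
  have Rsub: "R \<subseteq> EW" and acyc: "acyclic R" using RF unfolding F_def by auto
  have bck: "(v,u) \<in> R\<^sup>+" if "u\<in>W" "v\<in>W" "E u v" "(u,v) \<notin> R" for u v
  proof -
    have "insert (u,v) R \<notin> F" using mx that by blast
    then have "\<not> acyclic (insert (u,v) R)" using that Rsub unfolding F_def EW_def by auto
    then have "(v,u) \<in> R\<^sup>*" using acyc acyclic_insert by metis
    moreover have "u \<noteq> v" using irr that by auto
    ultimately show ?thesis using rtranclD by metis
  qed
  have W0: "0 < card W" using ind[rule_format, of "{}"] by simp
  show ?thesis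
  proof (rule ccontr)
    assume nop: "\<not> ?thesis"
    have nowalk: "(u,v) \<notin> R^^(r-1)" if "u\<in>W" for u v
    proof
      assume "(u,v) \<in> R^^(r-1)"
      then obtain g where g0: "g 0 = u" and gs: "\<forall>i<r-1. (g i, g (Suc i)) \<in> R"
        unfolding relpow_fun_conv by blast
      define hs where "hs = map g [0..<r]"
      have "length hs = r" unfolding hs_def by simp
      moreover have "distinct hs" unfolding hs_def distinct_map
      proof
        show "inj_on g (set [0..<r])"
          unfolding inj_on_def
        proof (intro ballI impI)
          fix i j assume ij: "i \<in> set [0..<r]" "j \<in> set [0..<r]" "g i = g j"
          show "i = j"
          proof (rule ccontr)
            assume "i \<noteq> j"
            then consider "i < j" | "j < i" by linarith
            then show False
            proof cases
              case 1
              have "j \<le> r - 1" using ij(2) by auto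
              then show False using walk_distinct[OF acyc gs 1] ij(3) by blast
            next
              case 2
              have "i \<le> r - 1" using ij(1) by auto
              then show False using walk_distinct[OF acyc gs 2] ij(3) by metis
            qed
          qed
        qed
      qed simp
      moreover have "set hs \<subseteq> W"
      proof
        fix x assume "x \<in> set hs"
        then obtain i where i: "i < r" "x = g i" unfolding hs_def by auto
        show "x \<in> W"
        proof (cases i)
          case 0 then show ?thesis using i g0 that by simp
        next
          case (Suc j)
          then have "(g j, g i) \<in> R" using gs i by auto
          then show ?thesis using Rsub i unfolding EW_def by auto
        qed
      qed
      moreover have "\<forall>i. Suc i < r \<longrightarrow> E (hs!i) (hs!Suc i)"
      proof (intro allI impI)
        fix i assume "Suc i < r"
        then have "(g i, g (Suc i)) \<in> R" using gs by auto
        moreover have "hs!i = g i" "hs!Suc i = g (Suc i)" using \<open>Suc i < r\<close> unfolding hs_def by simp_all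
        ultimately show "E (hs!i) (hs!Suc i)" using Rsub unfolding EW_def by auto
      qed
      ultimately show False using nop by blast
    qed
    define D where "D v = {j. \<exists>u\<in>W. (u,v) \<in> R^^j}" for v
    have Db: "D v \<subseteq> {..<r-1}" for v
    proof
      fix j assume "j \<in> D v"
      then obtain u where u: "u\<in>W" "(u,v) \<in> R^^j" unfolding D_def by auto
      show "j \<in> {..<r-1}"
      proof (rule ccontr)
        assume "j \<notin> {..<r-1}"
        then have "j = (r-1) + (j - (r-1))" by auto
        then have "(u,v) \<in> R^^(r-1) O R^^(j-(r-1))" using u relpow_add by metis
        then show False using nowalk u by blast
      qed
    qed
    have finD: "finite (D v)" for v using Db finite_subset by blast
    define dep where "dep v = Max (D v)" for v
    have D0: "0 \<in> D v" if "v \<in> W" for v unfolding D_def using that by auto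
    have depD: "dep v \<in> D v" if "v \<in> W" for v
      unfolding dep_def using D0[OF that] finD Max_in by blast
    have depge: "j \<le> dep v" if "j \<in> D v" for v j
      unfolding dep_def using that finD by simp
    have neq: "dep u \<noteq> dep v" if uvW: "u\<in>W" "v\<in>W" "E u v" for u v
    proof (cases "(u,v) \<in> R")
      case True
      obtain w where w: "w\<in>W" "(w,u) \<in> R^^(dep u)" using depD[OF uvW(1)] unfolding D_def by auto
      then have "(w,v) \<in> R^^(Suc (dep u))" using True relpow_Suc_I by metis
      then have "Suc (dep u) \<in> D v" unfolding D_def using w by auto
      then have "Suc (dep u) \<le> dep v" by (rule depge)
      then show ?thesis by simp
    next
      case False
      then have "(v,u) \<in> R\<^sup>+" using bck uvW by blast
      then obtain m where m: "m > 0" "(v,u) \<in> R^^m" using trancl_power by blast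
      obtain w where w: "w\<in>W" "(w,v) \<in> R^^(dep v)" using depD[OF uvW(2)] unfolding D_def by auto
      then have "(w,u) \<in> R^^(dep v + m)" using m relpow_add by (metis relcomp.relcompI)
      then have "dep v + m \<in> D u" unfolding D_def using w by auto
      then have "dep v + m \<le> dep u" by (rule depge)
      then show ?thesis using m by simp
    qed
    define L where "L j = {v\<in>W. dep v = j}" for j
    have WU: "W = (\<Union>j<r-1. L j)"
    proof
      show "W \<subseteq> (\<Union>j<r-1. L j)"
      proof
        fix v assume "v \<in> W"
        then have "dep v < r - 1" using depD Db by blast
        then show "v \<in> (\<Union>j<r-1. L j)" unfolding L_def using \<open>v\<in>W\<close> by auto
      qed
    qed (auto simp: L_def)
    have each: "card (L j) * r \<le> card W - 1" for j
    proof -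
      have "L j \<subseteq> W" unfolding L_def by auto
      moreover have "\<forall>u\<in>L j. \<forall>v\<in>L j. \<not> E u v"
      proof (intro ballI)
        fix u v assume "u \<in> L j" "v \<in> L j"
        then show "\<not> E u v" using neq[of u v] unfolding L_def by auto
      qed
      ultimately have "card (L j) * r < card W" using ind by blast
      then show ?thesis by linarith
    qed
    have "card W \<le> (\<Sum>j<r-1. card (L j))" using WU card_UN_le[of "{..<r-1}" L] by simp
    then have "card W * r \<le> (\<Sum>j<r-1. card (L j)) * r" by simp
    also have "\<dots> = (\<Sum>j<r-1. card (L j) * r)" by (simp add: sum_distrib_right)
    also have "\<dots> \<le> (\<Sum>j<r-1. card W - 1)" by (rule sum_mono) (rule each)
    also have "\<dots> = (r-1) * (card W - 1)" by simp
    finally have A: "card W * r \<le> (r-1) * (card W - 1)" .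
    have "(r-1) * (card W - 1) \<le> (r-1) * card W" by simp
    also have "\<dots> < r * card W" using r W0 by (simp add: diff_mult_distrib)
    finally show False using A by (simp add: mult.commute)
  qed
qed



definition runs_le :: "nat \<Rightarrow> bool list \<Rightarrow> bool" where
  "runs_le l Q \<longleftrightarrow> (\<forall>i m. i + m \<le> length Q \<and> (\<forall>j<m. Q!(i+j) = Q!i) \<longrightarrow> m \<le> l)"

lemma runs_drop: assumes "runs_le l Q" shows "runs_le l (drop r Q)"
  unfolding runs_le_def
proof (intro allI impI)
  fix i m assume h: "i + m \<le> length (drop r Q) \<and> (\<forall>j<m. drop r Q ! (i + j) = drop r Q ! i)"
  show "m \<le> l"
  proof (cases "m = 0")
    case False
    then have rl: "r \<le> length Q" "r + i + m \<le> length Q" using h by auto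
    have "\<forall>j<m. Q!((r+i)+j) = Q!(r+i)"
    proof (intro allI impI)
      fix j assume "j < m"
      then have "drop r Q ! (i + j) = drop r Q ! i" using h by blast
      then show "Q!((r+i)+j) = Q!(r+i)" using rl by (simp add: add.assoc)
    qed
    then show ?thesis using assms rl unfolding runs_le_def by blast
  qed simp
qed

lemma runs_P: "runs_le (longest_directed P) P"
  unfolding runs_le_def longest_directed_def
proof (intro allI impI)
  fix i m assume h: "i + m \<le> length P \<and> (\<forall>j<m. P ! (i + j) = P ! i)"
  have "finite {m. \<exists>i. i + m \<le> length P \<and> (\<forall>j<m. P ! (i + j) = P ! i)}"
    by (rule finite_subset[of _ "{..length P}"]) auto
  then show "m \<le> Max {m. \<exists>i. i + m \<le> length P \<and> (\<forall>j<m. P ! (i + j) = P ! i)}"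
    using h by (intro Max_ge) auto
qed

lemma embed:
  fixes V :: "'a set" and E :: "'a \<Rightarrow> 'a \<Rightarrow> bool" and X Y :: "'a set" and k n l :: nat
  assumes og: "oriented_graph V E" and mp: "mindegree_pair V E k X Y"
    and ind: "\<forall>S\<subseteq>V. (\<forall>u\<in>S. \<forall>v\<in>S. \<not> E u v) \<longrightarrow> card S * l < k - n"
  shows "runs_le l Q \<Longrightarrow> finite U \<Longrightarrow> card U + length Q \<le> n \<Longrightarrow> v0 \<in> V \<Longrightarrow> v0 \<notin> U
    \<Longrightarrow> (Q \<noteq> [] \<Longrightarrow> hd Q \<Longrightarrow> v0 \<in> X) \<Longrightarrow> (Q \<noteq> [] \<Longrightarrow> \<not> hd Q \<Longrightarrow> v0 \<in> Y)
    \<Longrightarrow> \<exists>vs. length vs = Suc (length Q) \<and> hd vs = v0 \<and> distinct vs \<and> set vs \<subseteq> V \<and> set vs \<inter> U = {}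
        \<and> (\<forall>i<length Q. if Q!i then E (vs!i) (vs!Suc i) else E (vs!Suc i) (vs!i))"
proof (induction "length Q" arbitrary: Q U v0 rule: less_induct)
  case less
  note prems = less.prems
  have finV: "finite V" and irrE: "\<forall>u. \<not> E u u" and asym: "\<forall>u v. E u v \<longrightarrow> \<not> E v u"
    using og unfolding oriented_graph_def by auto
  have XV: "X \<subseteq> V" and YV: "Y \<subseteq> V" and degX: "\<forall>x\<in>X. card {y\<in>Y. E x y} \<ge> k"
    and degY: "\<forall>y\<in>Y. card {x\<in>X. E x y} \<ge> k"
    using mp unfolding mindegree_pair_def by auto
  show ?case
  proof (cases "Q = []")
    case True
    then show ?thesis using prems by (intro exI[of _ "[v0]"]) auto
  next
    case Qne: False
    define b where "b = hd Q"
    define r where "r = length (takeWhile (\<lambda>x. x = b) Q)"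
    have r1: "1 \<le> r" unfolding r_def b_def using Qne by (cases Q) auto
    have rle: "r \<le> length Q" unfolding r_def by (rule length_takeWhile_le)
    have Qr: "Q!j = b" if "j < r" for j
    proof -
      have "takeWhile (\<lambda>x. x = b) Q ! j = Q ! j" using that unfolding r_def by (rule takeWhile_nth)
      moreover have "takeWhile (\<lambda>x. x = b) Q ! j \<in> set (takeWhile (\<lambda>x. x = b) Q)"
        using that unfolding r_def by simp
      ultimately have "Q ! j \<in> set (takeWhile (\<lambda>x. x = b) Q)" by simp
      then show ?thesis by (blast dest: set_takeWhileD)
    qed
    have Qrn: "Q!r \<noteq> b" if "r < length Q"
      using that nth_length_takeWhile[of "\<lambda>x. x = b" Q] unfolding r_def by simp
    have rl: "r \<le> l"
    proof -
      have "Q!0 = b" using Qne hd_conv_nth unfolding b_def by metis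
      then have "\<forall>j<r. Q!(0+j) = Q!0" using Qr by simp
      moreover have "0 + r \<le> length Q" using rle by simp
      ultimately show ?thesis using prems(1) unfolding runs_le_def by blast
    qed
    define E' where "E' a c = (if b then E a c else E c a)" for a c
    define Z where "Z = (if b then Y else X)"
    define W where "W = {y\<in>Z. E' v0 y} - U"
    have ZV: "Z \<subseteq> V" unfolding Z_def using XV YV by auto
    have WZ: "W \<subseteq> Z" unfolding W_def by auto
    have finW: "finite W" by (rule finite_subset[OF subset_trans[OF WZ ZV] finV])
    have v0s: "v0 \<in> (if b then X else Y)" using prems(6,7) Qne unfolding b_def by auto
    have degk: "card {y\<in>Z. E' v0 y} \<ge> k"
    proof (cases b)
      case True then show ?thesis using degX v0s unfolding Z_def E'_def by simp
    next
      case False then show ?thesis using degY v0s unfolding Z_def E'_def by simp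
    qed
    have "card {y\<in>Z. E' v0 y} - card U \<le> card W" unfolding W_def
      using prems(2) by (rule diff_card_le_card_Diff)
    then have cW: "k - n \<le> card W" using degk prems(3) by linarith
    have irr': "\<forall>u. \<not> E' u u" unfolding E'_def using irrE by auto
    have ind': "\<forall>S\<subseteq>W. (\<forall>u\<in>S. \<forall>v\<in>S. \<not> E' u v) \<longrightarrow> card S * r < card W"
    proof (intro allI impI)
      fix S assume S: "S \<subseteq> W" "\<forall>u\<in>S. \<forall>v\<in>S. \<not> E' u v"
      have "\<forall>u\<in>S. \<forall>v\<in>S. \<not> E u v" using S(2) unfolding E'_def by (cases b) auto
      moreover have "S \<subseteq> V" using S(1) WZ ZV by auto
      ultimately have "card S * l < k - n" using ind by blast
      moreover have "card S * r \<le> card S * l" using rl by simp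
      ultimately show "card S * r < card W" using cW by linarith
    qed
    obtain hs where hs: "length hs = r" "distinct hs" "set hs \<subseteq> W"
      "\<forall>i. Suc i < r \<longrightarrow> E' (hs!i) (hs!Suc i)"
      using gr[OF finW r1 irr' ind'] by blast
    have hsne: "hs \<noteq> []" using hs(1) r1 by auto
    have v0W: "v0 \<notin> W" unfolding W_def using irr' by auto
    define Q' where "Q' = drop r Q"
    define U' where "U' = insert v0 (U \<union> set (butlast hs))"
    define v1 where "v1 = last hs"
    have v1hs: "v1 = hs!(r-1)" unfolding v1_def using hsne hs(1) last_conv_nth by metis
    have v1W: "v1 \<in> W" unfolding v1_def using hsne hs(3) by auto
    have v1Z: "v1 \<in> Z" using v1W WZ by auto
    have IH: "\<exists>vs. length vs = Suc (length Q') \<and> hd vs = v1 \<and> distinct vs \<and> set vs \<subseteq> V \<and> set vs \<inter> U' = {}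
        \<and> (\<forall>i<length Q'. if Q'!i then E (vs!i) (vs!Suc i) else E (vs!Suc i) (vs!i))"
    proof (rule less.hyps)
      show "length Q' < length Q" unfolding Q'_def using r1 Qne by simp
      show "runs_le l Q'" unfolding Q'_def using prems(1) by (rule runs_drop)
      show "finite U'" unfolding U'_def using prems(2) by simp
      have "card U' \<le> Suc (card (U \<union> set (butlast hs)))" unfolding U'_def using prems(2) by (simp add: card_insert_if)
      also have "\<dots> \<le> Suc (card U + card (set (butlast hs)))" using card_Un_le by simp
      also have "\<dots> \<le> Suc (card U + length (butlast hs))" using card_length[of "butlast hs"] by linarith
      also have "\<dots> = card U + r" using hs(1) r1 by simp
      finally show "card U' + length Q' \<le> n" unfolding Q'_def using prems(3) rle by simp
      show "v1 \<in> V" using v1Z ZV by auto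
      have "v1 \<notin> set (butlast hs)"
      proof -
        have "distinct (butlast hs @ [last hs])" using append_butlast_last_id[OF hsne] hs(2) by simp
        then show ?thesis unfolding v1_def by simp
      qed
      moreover have "v1 \<noteq> v0" using v1W v0W by auto
      moreover have "v1 \<notin> U" using v1W unfolding W_def by auto
      ultimately show "v1 \<notin> U'" unfolding U'_def by auto
      have hdQ': "hd Q' = (\<not> b)" if "Q' \<noteq> []"
      proof -
        have "r < length Q" using that unfolding Q'_def by simp
        then show ?thesis unfolding Q'_def using hd_drop_conv_nth Qrn by (metis (full_types))
      qed
      show "v1 \<in> X" if "Q' \<noteq> []" "hd Q'" using hdQ' that v1Z unfolding Z_def by auto
      show "v1 \<in> Y" if "Q' \<noteq> []" "\<not> hd Q'" using hdQ' that v1Z unfolding Z_def by auto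
    qed
    then obtain vs' where vs': "length vs' = Suc (length Q')" "hd vs' = v1" "distinct vs'" "set vs' \<subseteq> V"
      "set vs' \<inter> U' = {}" "\<forall>i<length Q'. if Q'!i then E (vs'!i) (vs'!Suc i) else E (vs'!Suc i) (vs'!i)"
      by blast
    define vs where "vs = v0 # butlast hs @ vs'"
    have lbh: "length (butlast hs) = r - 1" using hs(1) by simp
    have A: "vs!(Suc j) = hs!j" if "j < r" for j
    proof (cases "j < r - 1")
      case True
      then have "butlast hs ! j = hs ! j" using lbh nth_butlast[of j hs] by simp
      then show ?thesis unfolding vs_def using lbh True by (simp add: nth_append)
    next
      case False
      then have "j = r - 1" using that by simp
      moreover have "vs' ! 0 = v1" using vs'(1,2) hd_conv_nth by (metis Zero_not_Suc list.size(3))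
      ultimately show ?thesis unfolding vs_def using lbh v1hs by (simp add: nth_append)
    qed
    have B: "vs!(r + t) = vs'!t" for t
    proof -
      have "r + t = Suc ((r - 1) + t)" using r1 by simp
      then have "vs!(r + t) = (butlast hs @ vs') ! (length (butlast hs) + t)" unfolding vs_def using lbh by simp
      then show ?thesis by (simp only: nth_append_length_plus)
    qed
    have vs0: "vs!0 = v0" unfolding vs_def by simp
    show ?thesis
    proof (intro exI conjI)
      show "length vs = Suc (length Q)" unfolding vs_def using lbh vs'(1) rle r1 unfolding Q'_def by simp
      show "hd vs = v0" unfolding vs_def by simp
      have bhW: "set (butlast hs) \<subseteq> W" using hs(3) in_set_butlastD by fastforce
      show "distinct vs" unfolding vs_def
        using vs'(3,5) bhW v0W distinct_butlast[OF hs(2)] unfolding U'_def by auto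
      show "set vs \<subseteq> V" unfolding vs_def using vs'(4) bhW WZ ZV prems(4) by auto
      show "set vs \<inter> U = {}" unfolding vs_def using vs'(5) bhW prems(5) unfolding U'_def W_def by auto
      show "\<forall>i<length Q. if Q!i then E (vs!i) (vs!Suc i) else E (vs!Suc i) (vs!i)"
      proof (intro allI impI)
        fix i assume i: "i < length Q"
        show "if Q!i then E (vs!i) (vs!Suc i) else E (vs!Suc i) (vs!i)"
        proof (cases "i < r")
          case True
          have "E' (vs!i) (vs!Suc i)"
          proof (cases i)
            case 0
            have "hs!0 \<in> set hs" using hsne by simp
            then have "hs!0 \<in> W" using hs(3) by blast
            then show ?thesis using 0 A[of 0] vs0 r1 unfolding W_def by simp
          next
            case (Suc j)
            then show ?thesis using A[of j] A[of i] True hs(4) by simp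
          qed
          then show ?thesis using Qr[OF True] unfolding E'_def by simp
        next
          case False
          define t where "t = i - r"
          have it: "i = r + t" using False unfolding t_def by simp
          have tl: "t < length Q'" unfolding Q'_def using i it by simp
          have "Q!i = Q'!t" unfolding Q'_def using it rle by simp
          moreover have "vs!i = vs'!t" using B it by simp
          moreover have "vs!Suc i = vs'!Suc t" using B[of "Suc t"] it by simp
          ultimately show ?thesis using vs'(6) tl by simp
        qed
      qed
    qed
  qed
qed

theorem mainTheorem7:
  fixes V :: "'a set" and E :: "'a \<Rightarrow> 'a \<Rightarrow> bool" and k :: nat and P :: "bool list"
  assumes "oriented_graph V E"
    and "k > 0"
    and "longest_directed P \<ge> 1"
    and "\<exists>X Y. mindegree_pair V E k X Y"
  shows "contains_path V E P \<or>
    (\<exists>S. independent_set V E S \<and>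
       real (card S) \<ge> (real k - real (path_length P)) / real (longest_directed P))"
proof (rule ccontr)
  assume neg: "\<not> ?thesis"
  define n where "n = length P"
  define l where "l = longest_directed P"
  have l1: "1 \<le> l" using assms(3) unfolding l_def .
  obtain X Y where mp: "mindegree_pair V E k X Y" using assms(4) by blast
  have noS: "\<not> real (card S) \<ge> (real k - real n) / real l" if "independent_set V E S" for S
    using neg that unfolding n_def l_def path_length_def by blast
  have ind: "\<forall>S\<subseteq>V. (\<forall>u\<in>S. \<forall>v\<in>S. \<not> E u v) \<longrightarrow> card S * l < k - n"
  proof (intro allI impI)
    fix S assume S: "S \<subseteq> V" "\<forall>u\<in>S. \<forall>v\<in>S. \<not> E u v"
    then have "real (card S) < (real k - real n) / real l" using noS unfolding independent_set_def by force
    then have r: "real (card S) * real l < real k - real n" using l1 by (simp add: pos_less_divide_eq)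
    then have "real n < real k" by (smt (verit) of_nat_0_le_iff mult_nonneg_nonneg)
    then have "n < k" by simp
    then have "real (k - n) = real k - real n" by simp
    with r have "real (card S * l) < real (k - n)" by simp
    then show "card S * l < k - n" by (simp only: of_nat_less_iff)
  qed
  have XV: "X \<subseteq> V" and YV: "Y \<subseteq> V" and Xne: "X \<noteq> {}" and Yne: "Y \<noteq> {}"
    using mp unfolding mindegree_pair_def by auto
  obtain v0 where v0: "v0 \<in> (if P \<noteq> [] \<and> \<not> hd P then Y else X)"
    using Xne Yne by (cases "P \<noteq> [] \<and> \<not> hd P") auto
  have v0V: "v0 \<in> V" using v0 XV YV by (auto split: if_splits)
  have ex: "\<exists>vs. length vs = Suc (length P) \<and> hd vs = v0 \<and> distinct vs \<and> set vs \<subseteq> V \<and> set vs \<inter> {} = {}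
        \<and> (\<forall>i<length P. if P!i then E (vs!i) (vs!Suc i) else E (vs!Suc i) (vs!i))"
  proof (rule embed[OF assms(1) mp ind])
    show "runs_le l P" unfolding l_def by (rule runs_P)
    show "v0 \<in> X" if "P \<noteq> []" "hd P" using v0 that by simp
    show "v0 \<in> Y" if "P \<noteq> []" "\<not> hd P" using v0 that by simp
  qed (use v0V n_def in auto)
  then obtain vs where vs: "length vs = Suc (length P)" "distinct vs" "set vs \<subseteq> V"
    "\<forall>i<length P. if P!i then E (vs!i) (vs!Suc i) else E (vs!Suc i) (vs!i)"
    by blast
  have "contains_path V E P" unfolding contains_path_def
  proof (intro exI conjI)
    show "inj_on ((!) vs) {0..length P}" using vs(1,2) by (intro inj_on_nth) auto
    show "(!) vs ` {0..length P} \<subseteq> V" using vs(1,3) nth_mem by fastforce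
    show "\<forall>i<length P. if P ! i then E (vs ! i) (vs ! Suc i) else E (vs ! Suc i) (vs ! i)" by (rule vs(4))
  qed
  then show False using neg by blast
qed


end
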